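(* Let $A$ be a superring and $S\subseteq A$ a Marshall coherent subset with $0\notin S$. Then: (i) if $A$ is full, $A/_mS$ is full; (ii) if $A$ is a superdomain, $A/_mS$ is a superdomain; (iii) if $A$ is a superfield, $A/_mS$ is a superfield.
   Context: Multivalued operations are extended to subsets by unions. A superring is a structure $(S,+,\cdot,-,0,1)$ with multivalued addition and multiplication such that $(S,+,-,0)$ is a commutative multigroup, $(S,\cdot,1)$ is a commutative multimonoid, $a\cdot0=\{0\}$, $c(a+b)\subseteq ca+cb$, and $-(ab)=(-a)b=a(-b)$ (multigroup axioms: $c\in ab\Rightarrow a\in c\,r(b)$ and $b\in r(a)c$; $b\in a\cdot1\iff a=b$; $(ab)c\subseteq a(bc)$; $ab=ba$; multimonoid: the last two and $a\in 1\cdot a$). It is full if $c(a+b)=ca+cb$ for all $a,b,c$. A superdomain is a nontrivial superring in which $0\in ab$ iff $a=0$ or $b=0$; a superfield is a superdomain in which every $a\ne0$ has some $b$ with $1\in ab$. A subset $S$ of a superring $A$ is Marshall coherent if it is multiplicative ($1\in S$, $S\cdot S\subseteq S$) and whenever $x,a\in A$ and $x\in as$ for some $s\in S$, there are $P,Q\subseteq S$ with $xP=aQ$. For $a,b\in A$, $a\sim_S b$ iff there are nonempty $X,Y\subseteq S$ with $aX=bY$. The Marshall quotient $A/_mS$ is the set of $\sim_S$-classes $[a]$ with: $[c]\in[a]+[b]$ iff there exist $c'\sim c$, $a'\sim a$, $b'\sim b$ with $c'\in a'+b'$; $[c]\in[a][b]$ iff there exist $c'\sim c,a'\sim a,b'\sim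 b$ with $c'\in a'b'$; $-[a]:=[-a]$; zero $[0]$, unit $[1]$. *)

theory Defs
  imports Main
begin

record 'a sr_struct =
  sr_carrier :: "'a set"
  sr_add :: "'a \<Rightarrow> 'a \<Rightarrow> 'a set"
  sr_mul :: "'a \<Rightarrow> 'a \<Rightarrow> 'a set"
  sr_neg :: "'a \<Rightarrow> 'a"
  sr_zero :: 'a
  sr_one :: 'a

definition set_add :: "('a, 'b) sr_struct_scheme \<Rightarrow> 'a set \<Rightarrow> 'a set \<Rightarrow> 'a set" where
  "set_add R X Y = (\<Union>x\<in>X. \<Union>y\<in>Y. sr_add R x y)"

definition set_mul :: "('a, 'b) sr_struct_scheme \<Rightarrow> 'a set \<Rightarrow> 'a set \<Rightarrow> 'a set" where
  "set_mul R X Y = (\<Union>x\<in>X. \<Union>y\<in>Y. sr_mul R x y)"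

definition superring :: "('a, 'b) sr_struct_scheme \<Rightarrow> bool" where
  "superring R \<longleftrightarrow>
     (let C = sr_carrier R in
      sr_zero R \<in> C \<and> sr_one R \<in> C \<and>
      (\<forall>a\<in>C. sr_neg R a \<in> C) \<and>
      (\<forall>a\<in>C. \<forall>b\<in>C. sr_add R a b \<subseteq> C \<and> sr_mul R a b \<subseteq> C) \<and>
      \<comment> \<open>(C,+,-,0) is a commutative multigroup\<close>
      (\<forall>a\<in>C. \<forall>b\<in>C. \<forall>c\<in>C. c \<in> sr_add R a b \<longrightarrow>
          a \<in> sr_add R c (sr_neg R b) \<and> b \<in> sr_add R (sr_neg R a) c) \<and>
      (\<forall>a\<in>C. \<forall>b\<in>C. b \<in> sr_add R a (sr_zero R) \<longleftrightarrow> a = b) \<and>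
      (\<forall>a\<in>C. \<forall>b\<in>C. \<forall>c\<in>C.
          set_add R (sr_add R a b) {c} \<subseteq> set_add R {a} (sr_add R b c)) \<and>
      (\<forall>a\<in>C. \<forall>b\<in>C. sr_add R a b = sr_add R b a) \<and>
      \<comment> \<open>(C,*,1) is a commutative multimonoid\<close>
      (\<forall>a\<in>C. \<forall>b\<in>C. \<forall>c\<in>C.
          set_mul R (sr_mul R a b) {c} \<subseteq> set_mul R {a} (sr_mul R b c)) \<and>
      (\<forall>a\<in>C. \<forall>b\<in>C. sr_mul R a b = sr_mul R b a) \<and>
      (\<forall>a\<in>C. a \<in> sr_mul R (sr_one R) a) \<and>
      \<comment> \<open>remaining superring axioms\<close>
      (\<forall>a\<in>C. sr_mul R a (sr_zero R) = {sr_zero R}) \<and>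
      (\<forall>a\<in>C. \<forall>b\<in>C. \<forall>c\<in>C.
          set_mul R {c} (sr_add R a b) \<subseteq> set_add R (sr_mul R c a) (sr_mul R c b)) \<and>
      (\<forall>a\<in>C. \<forall>b\<in>C. sr_neg R ` sr_mul R a b = sr_mul R (sr_neg R a) b \<and>
          sr_mul R (sr_neg R a) b = sr_mul R a (sr_neg R b)))"

definition full_superring :: "('a, 'b) sr_struct_scheme \<Rightarrow> bool" where
  "full_superring R \<longleftrightarrow> superring R \<and>
     (\<forall>a\<in>sr_carrier R. \<forall>b\<in>sr_carrier R. \<forall>c\<in>sr_carrier R.
        set_mul R {c} (sr_add R a b) = set_add R (sr_mul R c a) (sr_mul R c b))"

definition superdomain :: "('a, 'b) sr_struct_scheme \<Rightarrow> bool" where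
  "superdomain R \<longleftrightarrow> superring R \<and> sr_carrier R \<noteq> {sr_zero R} \<and>
     (\<forall>a\<in>sr_carrier R. \<forall>b\<in>sr_carrier R.
        sr_zero R \<in> sr_mul R a b \<longleftrightarrow> a = sr_zero R \<or> b = sr_zero R)"

definition superfield :: "('a, 'b) sr_struct_scheme \<Rightarrow> bool" where
  "superfield R \<longleftrightarrow> superdomain R \<and>
     (\<forall>a\<in>sr_carrier R. a \<noteq> sr_zero R \<longrightarrow> (\<exists>b\<in>sr_carrier R. sr_one R \<in> sr_mul R a b))"

definition marshall_coherent :: "('a, 'b) sr_struct_scheme \<Rightarrow> 'a set \<Rightarrow> bool" where
  "marshall_coherent R S \<longleftrightarrow>
     S \<subseteq> sr_carrier R \<and> sr_one R \<in> S \<and> set_mul R S S \<subseteq> S \<and>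
     (\<forall>x\<in>sr_carrier R. \<forall>a\<in>sr_carrier R. (\<exists>s\<in>S. x \<in> sr_mul R a s) \<longrightarrow>
        (\<exists>P Q. P \<subseteq> S \<and> Q \<subseteq> S \<and> P \<noteq> {} \<and> Q \<noteq> {} \<and>
               set_mul R {x} P = set_mul R {a} Q))"

definition msim :: "('a, 'b) sr_struct_scheme \<Rightarrow> 'a set \<Rightarrow> 'a \<Rightarrow> 'a \<Rightarrow> bool" where
  "msim R S a b \<longleftrightarrow> a \<in> sr_carrier R \<and> b \<in> sr_carrier R \<and>
     (\<exists>X Y. X \<noteq> {} \<and> Y \<noteq> {} \<and> X \<subseteq> S \<and> Y \<subseteq> S \<and>
            set_mul R {a} X = set_mul R {b} Y)"

definition mclass :: "('a, 'b) sr_struct_scheme \<Rightarrow> 'a set \<Rightarrow> 'a \<Rightarrow> 'a set" where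
  "mclass R S a = {b \<in> sr_carrier R. msim R S b a}"

definition marshall_quotient :: "('a, 'b) sr_struct_scheme \<Rightarrow> 'a set \<Rightarrow> 'a set sr_struct" where
  "marshall_quotient R S =
     (let C = sr_carrier R; cl = mclass R S; sim = msim R S in
     \<lparr> sr_carrier = cl ` C,
       sr_add = (\<lambda>U V. {W \<in> cl ` C. \<exists>a\<in>C. \<exists>b\<in>C. \<exists>c\<in>C.
                   U = cl a \<and> V = cl b \<and> W = cl c \<and>
                   (\<exists>a' b' c'. sim c' c \<and> sim a' a \<and> sim b' b \<and> c' \<in> sr_add R a' b')}),
       sr_mul = (\<lambda>U V. {W \<in> cl ` C. \<exists>a\<in>C. \<exists>b\<in>C. \<exists>c\<in>C.
                   U = cl a \<and> V = cl b \<and> W = cl c \<and>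
                   (\<exists>a' b' c'. sim c' c \<and> sim a' a \<and> sim b' b \<and> c' \<in> sr_mul R a' b')}),
       sr_neg = (\<lambda>U. cl (sr_neg R (SOME a. a \<in> C \<and> U = cl a))),
       sr_zero = cl (sr_zero R),
       sr_one = cl (sr_one R) \<rparr>)"

end

theory Submission
  imports Defs
begin


locale MQ =
  fixes A :: "('a, 'b) sr_struct_scheme" and S :: "'a set"
  assumes sr: "superring A" and mc: "marshall_coherent A S" and zS: "sr_zero A \<notin> S"
begin

abbreviation "C \<equiv> sr_carrier A"
abbreviation "mul \<equiv> sr_mul A"
abbreviation "add \<equiv> sr_add A"
abbreviation "ng \<equiv> sr_neg A"
abbreviation "zr \<equiv> sr_zero A"
abbreviation "one \<equiv> sr_one A"
abbreviation "SM \<equiv> set_mul A"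
abbreviation "SA \<equiv> set_add A"
abbreviation "sim \<equiv> msim A S"
abbreviation "cl \<equiv> mclass A S"

lemmas ax = sr[unfolded superring_def Let_def]
lemmas ax0 = ax[THEN conjunct1]
lemmas ax1 = ax[THEN conjunct2, THEN conjunct1]
lemmas ax2 = ax[THEN conjunct2, THEN conjunct2, THEN conjunct1]
lemmas ax3 = ax[THEN conjunct2, THEN conjunct2, THEN conjunct2, THEN conjunct1]
lemmas ax4 = ax[THEN conjunct2, THEN conjunct2, THEN conjunct2, THEN conjunct2, THEN conjunct1]
lemmas ax5 = ax[THEN conjunct2, THEN conjunct2, THEN conjunct2, THEN conjunct2, THEN conjunct2, THEN conjunct1]
lemmas ax6 = ax[THEN conjunct2, THEN conjunct2, THEN conjunct2, THEN conjunct2, THEN conjunct2, THEN conjunct2, THEN conjunct1]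
lemmas ax7 = ax[THEN conjunct2, THEN conjunct2, THEN conjunct2, THEN conjunct2, THEN conjunct2, THEN conjunct2, THEN conjunct2, THEN conjunct1]
lemmas ax8 = ax[THEN conjunct2, THEN conjunct2, THEN conjunct2, THEN conjunct2, THEN conjunct2, THEN conjunct2, THEN conjunct2, THEN conjunct2, THEN conjunct1]
lemmas ax9 = ax[THEN conjunct2, THEN conjunct2, THEN conjunct2, THEN conjunct2, THEN conjunct2, THEN conjunct2, THEN conjunct2, THEN conjunct2, THEN conjunct2, THEN conjunct1]
lemmas ax10 = ax[THEN conjunct2, THEN conjunct2, THEN conjunct2, THEN conjunct2, THEN conjunct2, THEN conjunct2, THEN conjunct2, THEN conjunct2, THEN conjunct2, THEN conjunct2, THEN conjunct1]
lemmas ax11 = ax[THEN conjunct2, THEN conjunct2, THEN conjunct2, THEN conjunct2, THEN conjunct2, THEN conjunct2, THEN conjunct2, THEN conjunct2, THEN conjunct2, THEN conjunct2, THEN conjunct2, THEN conjunct1]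
lemmas ax12 = ax[THEN conjunct2, THEN conjunct2, THEN conjunct2, THEN conjunct2, THEN conjunct2, THEN conjunct2, THEN conjunct2, THEN conjunct2, THEN conjunct2, THEN conjunct2, THEN conjunct2, THEN conjunct2, THEN conjunct1]
lemmas ax13 = ax[THEN conjunct2, THEN conjunct2, THEN conjunct2, THEN conjunct2, THEN conjunct2, THEN conjunct2, THEN conjunct2, THEN conjunct2, THEN conjunct2, THEN conjunct2, THEN conjunct2, THEN conjunct2, THEN conjunct2]

lemma zero_C: "zr \<in> C" using ax0 by blast
lemma one_C: "one \<in> C"
  using ax1 by blast
lemma neg_C: "a \<in> C \<Longrightarrow> ng a \<in> C"
  using ax2 by blast
lemma add_C: "a \<in> C \<Longrightarrow> b \<in> C \<Longrightarrow> add a b \<subseteq> C"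
  using ax3 by blast
lemma mul_C: "a \<in> C \<Longrightarrow> b \<in> C \<Longrightarrow> mul a b \<subseteq> C"
  using ax3 by blast
lemma rev1: "a \<in> C \<Longrightarrow> b \<in> C \<Longrightarrow> c \<in> C \<Longrightarrow> c \<in> add a b \<Longrightarrow> a \<in> add c (ng b)"
  using ax4 by blast
lemma rev2: "a \<in> C \<Longrightarrow> b \<in> C \<Longrightarrow> c \<in> C \<Longrightarrow> c \<in> add a b \<Longrightarrow> b \<in> add (ng a) c"
  using ax4 by blast
lemma add_zero: "a \<in> C \<Longrightarrow> b \<in> C \<Longrightarrow> b \<in> add a zr \<longleftrightarrow> a = b"
  using ax5 by blast
lemma add_assoc: "a \<in> C \<Longrightarrow> b \<in> C \<Longrightarrow> c \<in> C \<Longrightarrow> SA (add a b) {c} \<subseteq> SA {a} (add b c)"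
  using ax6 by blast
lemma add_comm: "a \<in> C \<Longrightarrow> b \<in> C \<Longrightarrow> add a b = add b a"
  using ax7 by blast
lemma mul_assoc: "a \<in> C \<Longrightarrow> b \<in> C \<Longrightarrow> c \<in> C \<Longrightarrow> SM (mul a b) {c} \<subseteq> SM {a} (mul b c)"
  using ax8 by blast
lemma mul_comm: "a \<in> C \<Longrightarrow> b \<in> C \<Longrightarrow> mul a b = mul b a"
  using ax9 by blast
lemma one_mul: "a \<in> C \<Longrightarrow> a \<in> mul one a"
  using ax10 by blast
lemma mul_zero: "a \<in> C \<Longrightarrow> mul a zr = {zr}"
  using ax11 by blast
lemma dist: "a \<in> C \<Longrightarrow> b \<in> C \<Longrightarrow> c \<in> C \<Longrightarrow> SM {c} (add a b) \<subseteq> SA (mul c a) (mul c b)"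
  using ax12 by blast
lemma neg_mul1: "a \<in> C \<Longrightarrow> b \<in> C \<Longrightarrow> ng ` mul a b = mul (ng a) b"
  using ax13 by blast
lemma neg_mul2: "a \<in> C \<Longrightarrow> b \<in> C \<Longrightarrow> mul (ng a) b = mul a (ng b)"
  using ax13 by blast


lemma mem_SM: "x \<in> SM X Y \<longleftrightarrow> (\<exists>a\<in>X. \<exists>b\<in>Y. x \<in> mul a b)"
  by (auto simp: set_mul_def)
lemma mem_SA: "x \<in> SA X Y \<longleftrightarrow> (\<exists>a\<in>X. \<exists>b\<in>Y. x \<in> add a b)"
  by (auto simp: set_add_def)

lemma mulC: "a \<in> C \<Longrightarrow> b \<in> C \<Longrightarrow> x \<in> mul a b \<Longrightarrow> x \<in> C" using mul_C by blast
lemma addC: "a \<in> C \<Longrightarrow> b \<in> C \<Longrightarrow> x \<in> add a b \<Longrightarrow> x \<in> C" using add_C by blast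

lemma SM_C: "X \<subseteq> C \<Longrightarrow> Y \<subseteq> C \<Longrightarrow> SM X Y \<subseteq> C"
  by (auto simp: mem_SM) (meson mulC subsetD)

lemma SM_comm: "X \<subseteq> C \<Longrightarrow> Y \<subseteq> C \<Longrightarrow> SM X Y = SM Y X"
  using mul_comm by (auto simp: mem_SM) (metis subsetD)+

lemma SM_mono: "X \<subseteq> X' \<Longrightarrow> Y \<subseteq> Y' \<Longrightarrow> SM X Y \<subseteq> SM X' Y'"
  unfolding mem_SM subset_iff by blast

lemma assoc_eq: assumes "a \<in> C" "b \<in> C" "c \<in> C"
  shows "SM (mul a b) {c} = SM {a} (mul b c)"
proof
  show "SM (mul a b) {c} \<subseteq> SM {a} (mul b c)" using mul_assoc assms by blast
  have "SM {a} (mul b c) = SM (mul b c) {a}" using SM_comm assms mul_C by auto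
  also have "\<dots> = SM (mul c b) {a}" using mul_comm assms by simp
  also have "\<dots> \<subseteq> SM {c} (mul b a)" using mul_assoc assms by blast
  also have "\<dots> = SM (mul b a) {c}" using SM_comm assms mul_C by auto
  also have "\<dots> = SM (mul a b) {c}" using mul_comm assms by simp
  finally show "SM {a} (mul b c) \<subseteq> SM (mul a b) {c}" .
qed

lemma SM_assoc: assumes "X \<subseteq> C" "Y \<subseteq> C" "Z \<subseteq> C"
  shows "SM (SM X Y) Z = SM X (SM Y Z)"
proof -
  have e: "\<And>x y z. x \<in> X \<Longrightarrow> y \<in> Y \<Longrightarrow> z \<in> Z \<Longrightarrow> SM (mul x y) {z} = SM {x} (mul y z)"
    using assoc_eq assms by blast
  show ?thesis
  proof (rule set_eqI)
    fix t
    have "t \<in> SM (SM X Y) Z \<longleftrightarrow> (\<exists>x\<in>X. \<exists>y\<in>Y. \<exists>z\<in>Z. t \<in> SM (mul x y) {z})"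
      unfolding set_mul_def by blast
    also have "\<dots> \<longleftrightarrow> (\<exists>x\<in>X. \<exists>y\<in>Y. \<exists>z\<in>Z. t \<in> SM {x} (mul y z))"
      using e by blast
    also have "\<dots> \<longleftrightarrow> t \<in> SM X (SM Y Z)" unfolding set_mul_def by blast
    finally show "t \<in> SM (SM X Y) Z \<longleftrightarrow> t \<in> SM X (SM Y Z)" .
  qed
qed

lemma mul_nonempty: assumes "a \<in> C" "b \<in> C" shows "mul a b \<noteq> {}"
proof -
  have "b \<in> add b zr" using add_zero assms zero_C by blast
  then have "zr \<in> add (ng b) b" using rev2 assms zero_C by blast
  then have z: "zr \<in> add b (ng b)" using add_comm assms neg_C by simp
  have "zr \<in> mul a zr" using mul_zero assms by simp
  then have "zr \<in> SM {a} (add b (ng b))" using z by (auto simp: mem_SM)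
  then have "zr \<in> SA (mul a b) (mul a (ng b))" using dist assms neg_C by blast
  then show ?thesis by (auto simp: mem_SA)
qed

lemma SM_nonempty: "X \<subseteq> C \<Longrightarrow> Y \<subseteq> C \<Longrightarrow> X \<noteq> {} \<Longrightarrow> Y \<noteq> {} \<Longrightarrow> SM X Y \<noteq> {}"
proof -
  assume a: "X \<subseteq> C" "Y \<subseteq> C" "X \<noteq> {}" "Y \<noteq> {}"
  then obtain x y where "x \<in> X" "y \<in> Y" by blast
  moreover then obtain v where "v \<in> mul x y" using mul_nonempty a by blast
  ultimately have "v \<in> SM X Y" unfolding mem_SM by blast
  then show ?thesis by blast
qed

lemma zero_mul: "b \<in> C \<Longrightarrow> mul zr b = {zr}"
  using mul_comm mul_zero zero_C by metis

lemma S_C: "S \<subseteq> C" and one_S: "one \<in> S" and SSS: "SM S S \<subseteq> S"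
  using mc unfolding marshall_coherent_def by blast+

lemma msimI: "a \<in> C \<Longrightarrow> b \<in> C \<Longrightarrow> X \<noteq> {} \<Longrightarrow> Y \<noteq> {} \<Longrightarrow> X \<subseteq> S \<Longrightarrow> Y \<subseteq> S \<Longrightarrow>
   SM {a} X = SM {b} Y \<Longrightarrow> sim a b"
  apply (unfold msim_def)
  apply (intro conjI)
    apply assumption
   apply assumption
  apply (rule exI[where x=X])
  apply (rule exI[where x=Y])
  apply (intro conjI)
      apply assumption+
  done

lemma msimE: assumes "sim a b"
  obtains X Y where "a \<in> C" "b \<in> C" "X \<noteq> {}" "Y \<noteq> {}" "X \<subseteq> S" "Y \<subseteq> S" "SM {a} X = SM {b} Y"
  using assms unfolding msim_def by blast

lemma coh: assumes "s \<in> S" "a \<in> C" "x \<in> mul a s" shows "sim x a"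
proof -
  have xC: "x \<in> C" using assms S_C mulC by blast
  from mc have "\<exists>P Q. P \<subseteq> S \<and> Q \<subseteq> S \<and> P \<noteq> {} \<and> Q \<noteq> {} \<and> SM {x} P = SM {a} Q"
    unfolding marshall_coherent_def using assms xC by blast
  then obtain P Qs where PQ: "P \<subseteq> S" "Qs \<subseteq> S" "P \<noteq> {}" "Qs \<noteq> {}" "SM {x} P = SM {a} Qs" by blast
  show ?thesis using xC assms(2) PQ(3,4,1,2,5) by (rule msimI)
qed

lemma sim_C: "sim a b \<Longrightarrow> a \<in> C" "sim a b \<Longrightarrow> b \<in> C"
  by (erule msimE, assumption)+

lemma sim_refl: "a \<in> C \<Longrightarrow> sim a a"
  apply (rule msimI[of a a "{one}" "{one}"])
  using one_S by auto

lemma sim_sym: assumes "sim a b" shows "sim b a"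
proof -
  obtain X Y where h: "a \<in> C" "b \<in> C" "X \<noteq> {}" "Y \<noteq> {}" "X \<subseteq> S" "Y \<subseteq> S" "SM {a} X = SM {b} Y"
    using assms by (rule msimE)
  from h(7) have e: "SM {b} Y = SM {a} X" by (rule sym)
  show ?thesis using h(2,1,4,3,6,5) e by (rule msimI)
qed

lemma sim_trans: assumes "sim a b" "sim b c" shows "sim a c"
proof -
  obtain X Y where C: "a \<in> C" "b \<in> C" and XY: "X \<noteq> {}" "Y \<noteq> {}" "X \<subseteq> S" "Y \<subseteq> S" "SM {a} X = SM {b} Y"
    using assms(1) by (rule msimE)
  obtain Z W where cC0: "b \<in> C" "c \<in> C" and ZW: "Z \<noteq> {}" "W \<noteq> {}" "Z \<subseteq> S" "W \<subseteq> S" "SM {b} Z = SM {c} W"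
    using assms(2) by (rule msimE)
  have cC: "c \<in> C" using cC0 by simp
  note SC = S_C
  have "SM {a} (SM X Z) = SM (SM {a} X) Z" using SM_assoc[of "{a}" X Z] C XY ZW SC by auto
  also have "\<dots> = SM (SM {b} Y) Z" using XY by simp
  also have "\<dots> = SM {b} (SM Y Z)" using SM_assoc[of "{b}" Y Z] C XY ZW SC by auto
  also have "\<dots> = SM {b} (SM Z Y)" using SM_comm[of Z Y] XY ZW SC by (metis subset_trans)
  also have "\<dots> = SM (SM {b} Z) Y" using SM_assoc[of "{b}" Z Y] C XY ZW SC by auto
  also have "\<dots> = SM (SM {c} W) Y" using ZW by simp
  also have "\<dots> = SM {c} (SM W Y)" using SM_assoc[of "{c}" W Y] cC XY ZW SC by auto
  finally have eq: "SM {a} (SM X Z) = SM {c} (SM W Y)" .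
  have s1: "SM X Z \<subseteq> S" using SM_mono[of X S Z S] XY ZW SSS by blast
  have s2: "SM W Y \<subseteq> S" using SM_mono[of W S Y S] XY ZW SSS by blast
  have n1: "SM X Z \<noteq> {}" using SM_nonempty XY ZW SC by (meson subset_trans)
  have n2: "SM W Y \<noteq> {}" using SM_nonempty XY ZW SC by (meson subset_trans)
  show ?thesis using C(1) cC n1 n2 s1 s2 eq by (rule msimI)
qed

lemma SM_neg: "a \<in> C \<Longrightarrow> X \<subseteq> C \<Longrightarrow> SM {ng a} X = ng ` SM {a} X"
proof -
  assume a: "a \<in> C" "X \<subseteq> C"
  have "SM {ng a} X = (\<Union>x\<in>X. mul (ng a) x)" by (simp add: set_mul_def)
  also have "\<dots> = (\<Union>x\<in>X. ng ` mul a x)" apply (rule SUP_cong[OF refl]) using neg_mul1 a by blast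
  also have "\<dots> = ng ` (\<Union>x\<in>X. mul a x)" by (simp add: image_UN)
  also have "\<dots> = ng ` SM {a} X" by (simp add: set_mul_def)
  finally show ?thesis .
qed

lemma sim_neg: assumes "sim a b" shows "sim (ng a) (ng b)"
proof -
  obtain X Y where C: "a \<in> C" "b \<in> C" and XY: "X \<noteq> {}" "Y \<noteq> {}" "X \<subseteq> S" "Y \<subseteq> S" "SM {a} X = SM {b} Y"
    using assms by (rule msimE)
  have "SM {ng a} X = ng ` SM {a} X" using SM_neg C XY S_C by (meson subset_trans)
  also have "\<dots> = ng ` SM {b} Y" using XY by simp
  also have "\<dots> = SM {ng b} Y" using SM_neg[of b Y] C XY S_C by (metis subset_trans)
  finally have e: "SM {ng a} X = SM {ng b} Y" .
  show ?thesis using neg_C[OF C(1)] neg_C[OF C(2)] XY(1-4) e by (rule msimI)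
qed

lemma cl_mem: "x \<in> cl a \<longleftrightarrow> sim x a"
  unfolding mclass_def using sim_C by blast

lemma cl_eq: assumes "a \<in> C" "b \<in> C" shows "cl a = cl b \<longleftrightarrow> sim a b"
proof
  assume "cl a = cl b"
  then show "sim a b" using cl_mem sim_refl assms by blast
next
  assume "sim a b"
  then show "cl a = cl b" using cl_mem sim_trans sim_sym by blast
qed

end


lemma ball_img: "(\<forall>x\<in>f ` A. P x) \<longleftrightarrow> (\<forall>y\<in>A. P (f y))" by blast

context MQ begin

abbreviation "Q \<equiv> marshall_quotient A S"

definition addR where "addR a b = {c. \<exists>a' b'. sim a' a \<and> sim b' b \<and> c \<in> add a' b'}"

lemma Q_carrier: "sr_carrier Q = cl ` C" by (simp add: marshall_quotient_def Let_def)
lemma Q_zero: "sr_zero Q = cl zr" by (simp add: marshall_quotient_def Let_def)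
lemma Q_one: "sr_one Q = cl one" by (simp add: marshall_quotient_def Let_def)
lemma Q_add: "sr_add Q U V = {W \<in> cl ` C. \<exists>a\<in>C. \<exists>b\<in>C. \<exists>c\<in>C. U = cl a \<and> V = cl b \<and> W = cl c \<and>
                   (\<exists>a' b' c'. sim c' c \<and> sim a' a \<and> sim b' b \<and> c' \<in> add a' b')}"
  by (simp add: marshall_quotient_def Let_def)
lemma Q_mul: "sr_mul Q U V = {W \<in> cl ` C. \<exists>a\<in>C. \<exists>b\<in>C. \<exists>c\<in>C. U = cl a \<and> V = cl b \<and> W = cl c \<and>
                   (\<exists>a' b' c'. sim c' c \<and> sim a' a \<and> sim b' b \<and> c' \<in> mul a' b')}"
  by (simp add: marshall_quotient_def Let_def)
lemma Q_neg_def: "sr_neg Q U = cl (ng (SOME a. a \<in> C \<and> U = cl a))"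
  by (simp add: marshall_quotient_def Let_def)

lemma Q_neg: assumes "a \<in> C" shows "sr_neg Q (cl a) = cl (ng a)"
proof -
  have "\<exists>x. x \<in> C \<and> cl a = cl x" using assms by blast
  then have h: "(SOME x. x \<in> C \<and> cl a = cl x) \<in> C \<and> cl a = cl (SOME x. x \<in> C \<and> cl a = cl x)"
    by (rule someI_ex)
  then have "sim (SOME x. x \<in> C \<and> cl a = cl x) a" using cl_eq assms sim_sym by metis
  then have "sim (ng (SOME x. x \<in> C \<and> cl a = cl x)) (ng a)" by (rule sim_neg)
  then show ?thesis unfolding Q_neg_def using cl_eq neg_C assms h by metis
qed

lemma addR_C: "addR a b \<subseteq> C"
  unfolding addR_def using addC sim_C by blast

lemma cl_sim: "sim x y \<Longrightarrow> cl x = cl y" using cl_eq sim_C by blast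

lemma cl_in_img: assumes "c \<in> C" "X \<subseteq> C" shows "cl c \<in> cl ` X \<longleftrightarrow> (\<exists>x\<in>X. sim x c)"
proof
  assume "cl c \<in> cl ` X"
  then obtain x where x: "x \<in> X" "cl c = cl x" by blast
  then have "sim c x" using cl_eq assms by blast
  then show "\<exists>x\<in>X. sim x c" using x sim_sym by blast
next
  assume "\<exists>x\<in>X. sim x c"
  then obtain x where x: "x \<in> X" "sim x c" by blast
  have "cl x = cl c" by (rule cl_sim[OF x(2)])
  then show "cl c \<in> cl ` X" using x by (metis imageI)
qed

lemma addQ: assumes "a \<in> C" "b \<in> C" shows "sr_add Q (cl a) (cl b) = cl ` addR a b"
proof
  show "sr_add Q (cl a) (cl b) \<subseteq> cl ` addR a b"
  proof
    fix W assume "W \<in> sr_add Q (cl a) (cl b)"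
    then obtain a0 b0 c a' b' c' where h: "a0 \<in> C" "b0 \<in> C" "c \<in> C" "cl a = cl a0" "cl b = cl b0"
      "W = cl c" "sim c' c" "sim a' a0" "sim b' b0" "c' \<in> add a' b'"
      unfolding Q_add by blast
    have "sim a' a" using h assms cl_eq sim_trans sim_sym by metis
    moreover have "sim b' b" using h assms cl_eq sim_trans sim_sym by metis
    ultimately have "c' \<in> addR a b" unfolding addR_def using h by blast
    moreover have "W = cl c'" using h cl_sim by simp
    ultimately show "W \<in> cl ` addR a b" by blast
  qed
next
  show "cl ` addR a b \<subseteq> sr_add Q (cl a) (cl b)"
  proof
    fix W assume "W \<in> cl ` addR a b"
    then obtain c where c: "c \<in> addR a b" "W = cl c" by blast
    have cC: "c \<in> C" using c addR_C by blast
    then show "W \<in> sr_add Q (cl a) (cl b)" unfolding Q_add using c assms sim_refl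
      unfolding addR_def by blast
  qed
qed

lemma SM_single: "SM {a} {b} = mul a b" by (simp add: set_mul_def)

lemma SM_AC: assumes "X \<subseteq> C" "Y \<subseteq> C" "Z \<subseteq> C" "W \<subseteq> C"
  shows "SM (SM X Y) (SM Z W) = SM (SM X Z) (SM Y W)"
proof -
  have "SM (SM X Y) (SM Z W) = SM X (SM Y (SM Z W))" using SM_assoc SM_C assms by metis
  also have "\<dots> = SM X (SM (SM Y Z) W)" using SM_assoc SM_C assms by metis
  also have "\<dots> = SM X (SM (SM Z Y) W)" using SM_comm assms by metis
  also have "\<dots> = SM X (SM Z (SM Y W))" using SM_assoc SM_C assms by metis
  also have "\<dots> = SM (SM X Z) (SM Y W)" using SM_assoc SM_C assms by metis
  finally show ?thesis .
qed

lemma keyM: assumes "sim a' a" "sim b' b" "c' \<in> mul a' b'"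
  shows "\<exists>v\<in>mul a b. sim v c'"
proof -
  obtain X Y where XY: "X \<noteq> {}" "Y \<noteq> {}" "X \<subseteq> S" "Y \<subseteq> S" "SM {a'} X = SM {a} Y"
    and C1: "a' \<in> C" "a \<in> C" using assms(1) unfolding msim_def by blast
  obtain Z W where ZW: "Z \<noteq> {}" "W \<noteq> {}" "Z \<subseteq> S" "W \<subseteq> S" "SM {b'} Z = SM {b} W"
    and C2: "b' \<in> C" "b \<in> C" using assms(2) unfolding msim_def by blast
  have SC: "X \<subseteq> C" "Y \<subseteq> C" "Z \<subseteq> C" "W \<subseteq> C" using XY ZW S_C by auto
  obtain x z where xz: "x \<in> X" "z \<in> Z" using XY ZW by blast
  have xzC: "x \<in> C" "z \<in> C" using xz SC by auto
  have c'C: "c' \<in> C" using assms C1 C2 mulC by blast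
  obtain u where u: "u \<in> mul c' x" using mul_nonempty c'C xzC by blast
  have uC: "u \<in> C" using u c'C xzC mulC by blast
  obtain t where t: "t \<in> mul u z" using mul_nonempty uC xzC by blast
  have t1: "t \<in> SM (SM {c'} {x}) {z}" using u t by (auto simp: mem_SM)
  also have "\<dots> = SM {c'} (SM {x} {z})" using SM_assoc c'C xzC by simp
  finally obtain s where s: "s \<in> SM {x} {z}" "t \<in> mul c' s" by (auto simp: mem_SM)
  have "s \<in> S" using s xz XY ZW SSS SM_mono[of "{x}" S "{z}" S] by blast
  then have sim1: "sim t c'" using coh s c'C by blast
  have "SM {c'} {x} \<subseteq> SM (SM {a'} {b'}) {x}" using assms(3) SM_single SM_mono by (metis empty_subsetI insert_subset order_refl)
  then have "t \<in> SM (SM (SM {a'} {b'}) {x}) {z}" using t1 SM_mono by blast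
  also have "\<dots> = SM (SM {a'} {b'}) (SM {x} {z})" using SM_assoc SM_C C1 C2 xzC by simp
  also have "\<dots> = SM (SM {a'} {x}) (SM {b'} {z})" using SM_AC C1 C2 xzC by simp
  also have "\<dots> \<subseteq> SM (SM {a'} X) (SM {b'} Z)" using SM_mono xz by (meson empty_subsetI insert_subset order_refl)
  also have "\<dots> = SM (SM {a} Y) (SM {b} W)" using XY ZW by simp
  also have "\<dots> = SM (SM {a} {b}) (SM Y W)" using SM_AC C1 C2 SC by simp
  finally obtain v s' where vs: "v \<in> mul a b" "s' \<in> SM Y W" "t \<in> mul v s'"
    by (auto simp: mem_SM SM_single)
  have "s' \<in> S" using vs XY ZW SSS SM_mono[of Y S W S] by blast
  moreover have "v \<in> C" using vs C1 C2 mulC by blast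
  ultimately have "sim t v" using coh vs by blast
  then have "sim v c'" using sim1 sim_sym sim_trans by blast
  then show ?thesis using vs by blast
qed

lemma mulQ: assumes "a \<in> C" "b \<in> C" shows "sr_mul Q (cl a) (cl b) = cl ` mul a b"
proof
  show "sr_mul Q (cl a) (cl b) \<subseteq> cl ` mul a b"
  proof
    fix W assume "W \<in> sr_mul Q (cl a) (cl b)"
    then obtain a0 b0 c a' b' c' where h: "a0 \<in> C" "b0 \<in> C" "c \<in> C" "cl a = cl a0" "cl b = cl b0"
      "W = cl c" "sim c' c" "sim a' a0" "sim b' b0" "c' \<in> mul a' b'"
      unfolding Q_mul by blast
    have "sim a' a" using h assms cl_eq sim_trans sim_sym by metis
    moreover have "sim b' b" using h assms cl_eq sim_trans sim_sym by metis
    ultimately obtain v where v: "v \<in> mul a b" "sim v c'" using keyM h by blast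
    have "W = cl v" using h v cl_sim sim_trans by metis
    then show "W \<in> cl ` mul a b" using v by blast
  qed
next
  show "cl ` mul a b \<subseteq> sr_mul Q (cl a) (cl b)"
  proof
    fix W assume "W \<in> cl ` mul a b"
    then obtain c where c: "c \<in> mul a b" "W = cl c" by blast
    have cC: "c \<in> C" using c assms mulC by blast
    then show "W \<in> sr_mul Q (cl a) (cl b)" unfolding Q_mul using c assms sim_refl by blast
  qed
qed

end


context MQ begin

lemma addR_mem: "c \<in> addR a b \<longleftrightarrow> (\<exists>a' b'. sim a' a \<and> sim b' b \<and> c \<in> add a' b')"
  unfolding addR_def by blast

lemma QA4: assumes "a \<in> C" "b \<in> C" "c \<in> C" "cl c \<in> sr_add Q (cl a) (cl b)"
  shows "cl a \<in> sr_add Q (cl c) (sr_neg Q (cl b)) \<and> cl b \<in> sr_add Q (sr_neg Q (cl a)) (cl c)"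
proof -
  obtain c' where c': "c' \<in> addR a b" "sim c' c" using assms addQ cl_in_img addR_C by metis
  then obtain a' b' where h: "sim a' a" "sim b' b" "c' \<in> add a' b'" unfolding addR_def by blast
  have C: "a' \<in> C" "b' \<in> C" "c' \<in> C" using h c' sim_C by auto
  have "a' \<in> add c' (ng b')" using rev1 C h by blast
  then have "a' \<in> addR c (ng b)" unfolding addR_def using c' h sim_neg by blast
  then have 1: "cl a \<in> sr_add Q (cl c) (sr_neg Q (cl b))"
    using addQ Q_neg assms neg_C cl_in_img addR_C h by metis
  have "b' \<in> add (ng a') c'" using rev2 C h by blast
  then have "b' \<in> addR (ng a) c" unfolding addR_def using c' h sim_neg by blast
  then have 2: "cl b \<in> sr_add Q (sr_neg Q (cl a)) (cl c)"
    using addQ Q_neg assms neg_C cl_in_img addR_C h by metis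
  show ?thesis using 1 2 by blast
qed

lemma sim_zero: assumes "sim z zr" shows "\<exists>y\<in>S. mul z y = {zr}"
proof -
  obtain X Y where XY: "X \<noteq> {}" "Y \<noteq> {}" "X \<subseteq> S" "Y \<subseteq> S" "SM {z} X = SM {zr} Y"
    and C1: "z \<in> C" using assms unfolding msim_def by blast
  have YC: "Y \<subseteq> C" using XY S_C by blast
  have "SM {zr} Y = {zr}"
  proof
    show "SM {zr} Y \<subseteq> {zr}" unfolding mem_SM subset_iff using zero_mul YC by blast
    obtain y where y: "y \<in> Y" using XY by blast
    then have "zr \<in> mul zr y" using zero_mul YC by blast
    then show "{zr} \<subseteq> SM {zr} Y" using y unfolding subset_iff mem_SM by blast
  qed
  then have e: "SM {z} X = {zr}" using XY by simp
  obtain y where y: "y \<in> X" using XY by blast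
  have "mul z y \<subseteq> SM {z} X" using y unfolding subset_iff mem_SM by blast
  then have 1: "mul z y \<subseteq> {zr}" using e by simp
  have yC: "y \<in> C" using y XY S_C by blast
  have 2: "mul z y \<noteq> {}" using mul_nonempty[OF C1 yC] .
  have "mul z y = {zr}" using subset_singletonD[OF 1] 2 by blast
  then show ?thesis using y XY(3) by blast
qed

lemma QA5: assumes "a \<in> C" "b \<in> C"
  shows "cl b \<in> sr_add Q (cl a) (cl zr) \<longleftrightarrow> cl a = cl b"
proof
  assume "cl a = cl b"
  then have "sim a b" using cl_eq assms by blast
  moreover have "a \<in> addR a zr" unfolding addR_def using sim_refl assms zero_C add_zero by blast
  ultimately show "cl b \<in> sr_add Q (cl a) (cl zr)" using addQ assms zero_C cl_in_img addR_C by metis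
next
  assume "cl b \<in> sr_add Q (cl a) (cl zr)"
  then obtain x where x: "x \<in> addR a zr" "sim x b" using addQ assms zero_C cl_in_img addR_C by metis
  then obtain a' z where h: "sim a' a" "sim z zr" "x \<in> add a' z" unfolding addR_def by blast
  have C: "a' \<in> C" "z \<in> C" "x \<in> C" using h x sim_C by auto
  obtain y where y: "y \<in> S" "mul z y = {zr}" using sim_zero h by blast
  have yC: "y \<in> C" using y S_C by blast
  have "SM {y} (add a' z) \<subseteq> SA (mul y a') (mul y z)" using dist C yC by blast
  also have "\<dots> = SA (mul y a') {zr}" using mul_comm y yC C by simp
  also have "\<dots> \<subseteq> mul y a'"
  proof
    fix u assume "u \<in> SA (mul y a') {zr}"
    then obtain p where p: "p \<in> mul y a'" "u \<in> add p zr" by (auto simp: mem_SA)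
    have pC: "p \<in> C" using mulC[OF yC C(1) p(1)] .
    have uC: "u \<in> C" using addC[OF pC zero_C p(2)] .
    have "p = u" using add_zero[OF pC uC] p(2) by blast
    then show "u \<in> mul y a'" using p by simp
  qed
  finally have sub: "SM {y} (add a' z) \<subseteq> mul y a'" .
  obtain u where u: "u \<in> mul x y" using mul_nonempty C yC by blast
  have "u \<in> SM {y} (add a' z)" using u h mul_comm C yC by (auto simp: mem_SM)
  then have "u \<in> mul a' y" using sub mul_comm C yC by auto
  then have "sim u a'" using coh y C by blast
  moreover have "sim u x" using coh u y C by blast
  ultimately have "sim x a'" using sim_sym sim_trans by blast
  then have "sim a b" using h x sim_sym sim_trans by blast
  then show "cl a = cl b" using cl_eq assms by blast
qed

lemma core_assoc: assumes "d \<in> addR a b" "e \<in> addR d c"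
  shows "\<exists>f\<in>addR b c. \<exists>g\<in>addR a f. sim g e"
proof -
  obtain a' b' where h1: "sim a' a" "sim b' b" "d \<in> add a' b'" using assms unfolding addR_def by blast
  obtain d'' c'' where h2: "sim d'' d" "sim c'' c" "e \<in> add d'' c''" using assms unfolding addR_def by blast
  have C0: "a' \<in> C" "b' \<in> C" "d \<in> C" "d'' \<in> C" "c'' \<in> C" using h1 h2 sim_C by auto
  have C: "a' \<in> C" "b' \<in> C" "d \<in> C" "d'' \<in> C" "c'' \<in> C" "e \<in> C" using C0 addC[OF C0(4,5) h2(3)] by auto
  obtain X Y where XY: "X \<noteq> {}" "Y \<noteq> {}" "X \<subseteq> S" "Y \<subseteq> S" "SM {d} X = SM {d''} Y"
    using h2(1) sim_sym unfolding msim_def by metis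
  obtain y where y: "y \<in> Y" using XY by blast
  have yC: "y \<in> C" using y XY S_C by blast
  obtain g where g: "g \<in> mul e y" using mul_nonempty C yC by blast
  have "g \<in> SM {y} (add d'' c'')" using g h2 mul_comm C yC by (auto simp: mem_SM)
  also have "\<dots> \<subseteq> SA (mul y d'') (mul y c'')" using dist C yC by blast
  finally obtain u v where uv: "u \<in> mul y d''" "v \<in> mul y c''" "g \<in> add u v" by (auto simp: mem_SA)
  have "u \<in> SM {d''} Y" using uv y mul_comm C yC by (auto simp: mem_SM)
  then have "u \<in> SM {d} X" using XY(5) by simp
  then obtain x where x: "x \<in> X" "u \<in> mul d x" unfolding mem_SM by blast
  have xC: "x \<in> C" using x XY S_C by blast
  have "u \<in> SM {x} (add a' b')" using x h1 mul_comm C xC by (auto simp: mem_SM)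
  also have "\<dots> \<subseteq> SA (mul x a') (mul x b')" using dist C xC by blast
  finally obtain p q where pq: "p \<in> mul x a'" "q \<in> mul x b'" "u \<in> add p q" by (auto simp: mem_SA)
  have CC: "p \<in> C" "q \<in> C" "u \<in> C" "v \<in> C"
    using mulC[OF xC C(1) pq(1)] mulC[OF xC C(2) pq(2)] mulC[OF C(3) xC x(2)] mulC[OF yC C(5) uv(2)] by auto
  have xS: "x \<in> S" "y \<in> S" using x y XY by auto
  have "g \<in> SA (add p q) {v}" using pq uv by (auto simp: mem_SA)
  also have "\<dots> \<subseteq> SA {p} (add q v)" using add_assoc CC by blast
  finally obtain f where f: "f \<in> add q v" "g \<in> add p f" by (auto simp: mem_SA)
  have "p \<in> mul a' x" using pq(1) mul_comm[OF C(1) xC] by simp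
  then have "sim p a'" using coh[OF xS(1) C(1)] by blast
  then have sp: "sim p a" using h1 sim_trans by blast
  have "q \<in> mul b' x" using pq(2) mul_comm[OF C(2) xC] by simp
  then have "sim q b'" using coh[OF xS(1) C(2)] by blast
  then have sq: "sim q b" using h1 sim_trans by blast
  have "v \<in> mul c'' y" using uv(2) mul_comm[OF C(5) yC] by simp
  then have "sim v c''" using coh[OF xS(2) C(5)] by blast
  then have sv: "sim v c" using h2 sim_trans by blast
  have fR: "f \<in> addR b c" unfolding addR_def using sq sv f by blast
  have fC: "f \<in> C" using fR addR_C by blast
  have "g \<in> addR a f" unfolding addR_def using sp f sim_refl fC by blast
  moreover have "sim g e" using coh[OF xS(2) C(6) g] .
  ultimately show ?thesis using fR by blast
qed

lemma QA6: assumes "a \<in> C" "b \<in> C" "c \<in> C"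
  shows "set_add Q (sr_add Q (cl a) (cl b)) {cl c} \<subseteq> set_add Q {cl a} (sr_add Q (cl b) (cl c))"
proof
  fix t assume "t \<in> set_add Q (sr_add Q (cl a) (cl b)) {cl c}"
  then obtain D where D: "D \<in> sr_add Q (cl a) (cl b)" "t \<in> sr_add Q D (cl c)"
    unfolding set_add_def by blast
  then obtain d where d: "d \<in> addR a b" "D = cl d" using addQ assms by auto
  have dC: "d \<in> C" using d addR_C by blast
  obtain e where e: "e \<in> addR d c" "t = cl e" using D d addQ dC assms by auto
  obtain f g where fg: "f \<in> addR b c" "g \<in> addR a f" "sim g e" using core_assoc d e by blast
  have fC: "f \<in> C" using fg addR_C by blast
  have 1: "cl f \<in> sr_add Q (cl b) (cl c)" using fg addQ assms by blast
  have "t = cl g" using fg e cl_sim by simp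
  then have "t \<in> sr_add Q (cl a) (cl f)" using fg addQ assms fC by blast
  then show "t \<in> set_add Q {cl a} (sr_add Q (cl b) (cl c))" using 1 unfolding set_add_def by blast
qed

lemma QA7: assumes "a \<in> C" "b \<in> C" shows "sr_add Q (cl a) (cl b) = sr_add Q (cl b) (cl a)"
proof -
  have "addR a b = addR b a" unfolding addR_def using add_comm sim_C by blast
  then show ?thesis using addQ assms by simp
qed

lemma QA8: assumes "a \<in> C" "b \<in> C" "c \<in> C"
  shows "set_mul Q (sr_mul Q (cl a) (cl b)) {cl c} \<subseteq> set_mul Q {cl a} (sr_mul Q (cl b) (cl c))"
proof
  fix t assume "t \<in> set_mul Q (sr_mul Q (cl a) (cl b)) {cl c}"
  then obtain D where D: "D \<in> sr_mul Q (cl a) (cl b)" "t \<in> sr_mul Q D (cl c)"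
    unfolding set_mul_def by blast
  then obtain d where d: "d \<in> mul a b" "D = cl d" using mulQ assms by auto
  have dC: "d \<in> C" using d assms mulC by blast
  obtain e where e: "e \<in> mul d c" "t = cl e" using D d mulQ dC assms by auto
  have "e \<in> SM (mul a b) {c}" using d e by (auto simp: mem_SM)
  also have "\<dots> \<subseteq> SM {a} (mul b c)" using mul_assoc assms by blast
  finally obtain f where f: "f \<in> mul b c" "e \<in> mul a f" by (auto simp: mem_SM)
  have fC: "f \<in> C" using f assms mulC by blast
  have 1: "cl f \<in> sr_mul Q (cl b) (cl c)" using f mulQ assms by blast
  have "t \<in> sr_mul Q (cl a) (cl f)" using f e mulQ assms fC by blast
  then show "t \<in> set_mul Q {cl a} (sr_mul Q (cl b) (cl c))" using 1 unfolding set_mul_def by blast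
qed

lemma QA9: assumes "a \<in> C" "b \<in> C" shows "sr_mul Q (cl a) (cl b) = sr_mul Q (cl b) (cl a)"
  using mulQ mul_comm assms by simp

lemma QA10: assumes "a \<in> C" shows "cl a \<in> sr_mul Q (cl one) (cl a)"
  using mulQ one_mul one_C assms by simp

lemma QA11: assumes "a \<in> C" shows "sr_mul Q (cl a) (cl zr) = {cl zr}"
  using mulQ mul_zero zero_C assms by simp

lemma QA12: assumes "a \<in> C" "b \<in> C" "c \<in> C"
  shows "set_mul Q {cl c} (sr_add Q (cl a) (cl b)) \<subseteq> set_add Q (sr_mul Q (cl c) (cl a)) (sr_mul Q (cl c) (cl b))"
proof
  fix t assume "t \<in> set_mul Q {cl c} (sr_add Q (cl a) (cl b))"
  then obtain D where D: "D \<in> sr_add Q (cl a) (cl b)" "t \<in> sr_mul Q (cl c) D"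
    unfolding set_mul_def by blast
  then obtain d where d: "d \<in> addR a b" "D = cl d" using addQ assms by auto
  have dC: "d \<in> C" using d addR_C by blast
  obtain e where e: "e \<in> mul c d" "t = cl e" using D d mulQ dC assms by auto
  obtain a' b' where h: "sim a' a" "sim b' b" "d \<in> add a' b'" using d unfolding addR_def by blast
  have C: "a' \<in> C" "b' \<in> C" using h sim_C by auto
  have "e \<in> SM {c} (add a' b')" using e h by (auto simp: mem_SM)
  also have "\<dots> \<subseteq> SA (mul c a') (mul c b')" using dist C assms by blast
  finally obtain p q where pq: "p \<in> mul c a'" "q \<in> mul c b'" "e \<in> add p q" by (auto simp: mem_SA)
  have pqC: "p \<in> C" "q \<in> C" using mulC[OF assms(3) C(1) pq(1)] mulC[OF assms(3) C(2) pq(2)] by auto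
  have "cl p \<in> sr_mul Q (cl c) (cl a')" using mulQ pq C assms by blast
  then have 1: "cl p \<in> sr_mul Q (cl c) (cl a)" using cl_sim h by simp
  have "cl q \<in> sr_mul Q (cl c) (cl b')" using mulQ pq C assms by blast
  then have 2: "cl q \<in> sr_mul Q (cl c) (cl b)" using cl_sim h by simp
  have "e \<in> addR p q" unfolding addR_def using pq pqC sim_refl by blast
  then have "t \<in> sr_add Q (cl p) (cl q)" using e addQ pqC by blast
  then show "t \<in> set_add Q (sr_mul Q (cl c) (cl a)) (sr_mul Q (cl c) (cl b))"
    using 1 2 unfolding set_add_def by blast
qed

lemma QA13: assumes "a \<in> C" "b \<in> C"
  shows "sr_neg Q ` sr_mul Q (cl a) (cl b) = sr_mul Q (sr_neg Q (cl a)) (cl b) \<and>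
         sr_mul Q (sr_neg Q (cl a)) (cl b) = sr_mul Q (cl a) (sr_neg Q (cl b))"
proof -
  have "sr_neg Q ` sr_mul Q (cl a) (cl b) = (\<lambda>v. sr_neg Q (cl v)) ` mul a b"
    using mulQ assms by (simp add: image_image)
  also have "\<dots> = (\<lambda>v. cl (ng v)) ` mul a b"
  proof (rule image_cong[OF refl])
    fix v assume "v \<in> mul a b"
    then have "v \<in> C" using mulC[OF assms] by blast
    then show "sr_neg Q (cl v) = cl (ng v)" by (rule Q_neg)
  qed
  also have "\<dots> = cl ` (ng ` mul a b)" by (simp add: image_image)
  also have "\<dots> = cl ` mul (ng a) b" using neg_mul1 assms by simp
  also have "\<dots> = sr_mul Q (sr_neg Q (cl a)) (cl b)" using mulQ Q_neg neg_C assms by simp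
  finally have 1: "sr_neg Q ` sr_mul Q (cl a) (cl b) = sr_mul Q (sr_neg Q (cl a)) (cl b)" .
  have "sr_mul Q (sr_neg Q (cl a)) (cl b) = cl ` mul (ng a) b" using mulQ Q_neg neg_C assms by simp
  also have "\<dots> = cl ` mul a (ng b)" using neg_mul2 assms by simp
  also have "\<dots> = sr_mul Q (cl a) (sr_neg Q (cl b))" using mulQ Q_neg neg_C assms by simp
  finally show ?thesis using 1 by simp
qed

lemma Q_superring: "superring Q"
  unfolding superring_def Let_def Q_carrier Q_zero Q_one ball_img
  apply (intro conjI)
  using zero_C apply blast
  using one_C apply blast
  using Q_neg neg_C apply simp
  using addQ mulQ addR_C mul_C apply (simp add: image_mono)
  using QA4 apply blast
  using QA5 zero_C apply blast
  using QA6 apply blast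
  using QA7 apply blast
  using QA8 apply blast
  using QA9 apply blast
  using QA10 apply blast
  using QA11 apply blast
  using QA12 apply blast
  using QA13 apply blast
  done

end


context MQ begin

lemma full_ax: "full_superring A \<Longrightarrow> a \<in> C \<Longrightarrow> b \<in> C \<Longrightarrow> c \<in> C \<Longrightarrow>
   SM {c} (add a b) = SA (mul c a) (mul c b)"
  unfolding full_superring_def by blast

lemma core_full: assumes full: "full_superring A" and cC: "c \<in> C" and aC: "a \<in> C" and bC: "b \<in> C"
  and p: "p \<in> mul c a" and q: "q \<in> mul c b" and e: "e \<in> addR p q"
  shows "\<exists>d\<in>addR a b. \<exists>g\<in>mul c d. sim g e"
proof -
  obtain p' q' where h: "sim p' p" "sim q' q" "e \<in> add p' q'" using e unfolding addR_def by blast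
  have C0: "p' \<in> C" "q' \<in> C" "p \<in> C" "q \<in> C" using h sim_C by auto
  have C: "p' \<in> C" "q' \<in> C" "p \<in> C" "q \<in> C" "e \<in> C" using C0 addC[OF C0(1,2) h(3)] by auto
  obtain X Y where XY: "X \<noteq> {}" "Y \<noteq> {}" "X \<subseteq> S" "Y \<subseteq> S" "SM {p'} X = SM {p} Y"
    using h(1) unfolding msim_def by blast
  obtain Z W where ZW: "Z \<noteq> {}" "W \<noteq> {}" "Z \<subseteq> S" "W \<subseteq> S" "SM {q'} Z = SM {q} W"
    using h(2) unfolding msim_def by blast
  have SC: "X \<subseteq> C" "Y \<subseteq> C" "Z \<subseteq> C" "W \<subseteq> C" using XY ZW S_C by auto
  obtain x z where xz: "x \<in> X" "z \<in> Z" using XY ZW by blast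
  have xzC: "x \<in> C" "z \<in> C" using xz SC by auto
  obtain t where t: "t \<in> mul x z" using mul_nonempty xzC by blast
  have "t \<in> SM S S" using t xz XY(3) ZW(3) unfolding mem_SM by blast
  then have tS: "t \<in> S" using SSS by blast
  have tC: "t \<in> C" using tS S_C by blast
  obtain g where g: "g \<in> mul e t" using mul_nonempty C tC by blast
  have "g \<in> SM {t} (add p' q')" using g h mul_comm C tC by (auto simp: mem_SM)
  also have "\<dots> \<subseteq> SA (mul t p') (mul t q')" using dist C tC by blast
  finally obtain u v where uv: "u \<in> mul t p'" "v \<in> mul t q'" "g \<in> add u v" by (auto simp: mem_SA)
  have "u \<in> SM {p'} (SM {x} {z})" using uv t mul_comm C tC by (auto simp: mem_SM SM_single)
  also have "\<dots> = SM (SM {p'} {x}) {z}" using SM_assoc C xzC by simp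
  also have "\<dots> \<subseteq> SM (SM {p'} X) {z}" using SM_mono xz by (meson empty_subsetI insert_subset order_refl)
  also have "\<dots> = SM {p} (SM Y {z})" using XY SM_assoc C SC xzC by simp
  finally obtain s1 where s1: "s1 \<in> SM Y {z}" "u \<in> mul p s1" by (auto simp: mem_SM)
  have "s1 \<in> SM S S" using s1(1) xz XY(4) ZW(3) unfolding mem_SM by blast
  then have s1S: "s1 \<in> S" using SSS by blast
  have s1C: "s1 \<in> C" using s1S S_C by blast
  have "u \<in> SM (mul c a) {s1}" using s1 p by (auto simp: mem_SM)
  also have "\<dots> = SM {c} (mul a s1)" using assoc_eq cC aC s1C by blast
  finally obtain a1 where a1: "a1 \<in> mul a s1" "u \<in> mul c a1" by (auto simp: mem_SM)
  have "t \<in> mul z x" using t mul_comm xzC by blast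
  then have "v \<in> SM {q'} (SM {z} {x})" using uv mul_comm C tC by (auto simp: mem_SM SM_single)
  also have "\<dots> = SM (SM {q'} {z}) {x}" using SM_assoc C xzC by simp
  also have "\<dots> \<subseteq> SM (SM {q'} Z) {x}" using SM_mono xz by (meson empty_subsetI insert_subset order_refl)
  also have "\<dots> = SM {q} (SM W {x})" using ZW SM_assoc C SC xzC by simp
  finally obtain s2 where s2: "s2 \<in> SM W {x}" "v \<in> mul q s2" by (auto simp: mem_SM)
  have "s2 \<in> SM S S" using s2(1) xz XY(3) ZW(4) unfolding mem_SM by blast
  then have s2S: "s2 \<in> S" using SSS by blast
  have s2C: "s2 \<in> C" using s2S S_C by blast
  have "v \<in> SM (mul c b) {s2}" using s2 q by (auto simp: mem_SM)
  also have "\<dots> = SM {c} (mul b s2)" using assoc_eq cC bC s2C by blast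
  finally obtain b1 where b1: "b1 \<in> mul b s2" "v \<in> mul c b1" by (auto simp: mem_SM)
  have abC: "a1 \<in> C" "b1 \<in> C" using mulC[OF aC s1C a1(1)] mulC[OF bC s2C b1(1)] by auto
  have "g \<in> SA (mul c a1) (mul c b1)" using uv a1 b1 by (auto simp: mem_SA)
  also have "\<dots> = SM {c} (add a1 b1)" using full_ax[OF full abC cC] by simp
  finally obtain d where d: "d \<in> add a1 b1" "g \<in> mul c d" by (auto simp: mem_SM)
  have "sim a1 a" using coh[OF s1S aC a1(1)] .
  moreover have "sim b1 b" using coh b1 s2S bC by blast
  ultimately have "d \<in> addR a b" unfolding addR_def using d by blast
  moreover have "sim g e" using coh[OF tS C(5) g] .
  ultimately show ?thesis using d by blast
qed

lemma QF: assumes full: "full_superring A" and "a \<in> C" "b \<in> C" "c \<in> C"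
  shows "set_mul Q {cl c} (sr_add Q (cl a) (cl b)) = set_add Q (sr_mul Q (cl c) (cl a)) (sr_mul Q (cl c) (cl b))"
proof
  show "set_mul Q {cl c} (sr_add Q (cl a) (cl b)) \<subseteq> set_add Q (sr_mul Q (cl c) (cl a)) (sr_mul Q (cl c) (cl b))"
    using QA12 assms by blast
next
  show "set_add Q (sr_mul Q (cl c) (cl a)) (sr_mul Q (cl c) (cl b)) \<subseteq> set_mul Q {cl c} (sr_add Q (cl a) (cl b))"
  proof
    fix t assume "t \<in> set_add Q (sr_mul Q (cl c) (cl a)) (sr_mul Q (cl c) (cl b))"
    then obtain P R where PR: "P \<in> sr_mul Q (cl c) (cl a)" "R \<in> sr_mul Q (cl c) (cl b)" "t \<in> sr_add Q P R"
      unfolding set_add_def by blast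
    then obtain p q where pq: "p \<in> mul c a" "q \<in> mul c b" "P = cl p" "R = cl q" using mulQ assms by auto
    have pqC: "p \<in> C" "q \<in> C" using mulC[OF assms(4) assms(2) pq(1)] mulC[OF assms(4) assms(3) pq(2)] by auto
    obtain e where e: "e \<in> addR p q" "t = cl e" using PR pq addQ pqC by auto
    obtain d g where dg: "d \<in> addR a b" "g \<in> mul c d" "sim g e" using core_full assms pq e by blast
    have dC: "d \<in> C" using dg addR_C by blast
    have 1: "cl d \<in> sr_add Q (cl a) (cl b)" using dg addQ assms by blast
    have "t = cl g" using dg e cl_sim by simp
    then have "t \<in> sr_mul Q (cl c) (cl d)" using dg mulQ assms dC by blast
    then show "t \<in> set_mul Q {cl c} (sr_add Q (cl a) (cl b))" using 1 unfolding set_mul_def by blast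
  qed
qed

lemma Q_full: "full_superring A \<Longrightarrow> full_superring Q"
  unfolding full_superring_def[of Q] Q_carrier ball_img using Q_superring QF by blast

lemma sim_zero_dom: assumes "superdomain A" "sim x zr" shows "x = zr"
proof -
  obtain y where y: "y \<in> S" "mul x y = {zr}" using sim_zero assms by blast
  have "x \<in> C" "y \<in> C" using assms sim_C y S_C by auto
  then have "x = zr \<or> y = zr" using assms(1) y unfolding superdomain_def by blast
  then show ?thesis using y zS by blast
qed

lemma cl_zero_iff: "superdomain A \<Longrightarrow> a \<in> C \<Longrightarrow> cl a = cl zr \<longleftrightarrow> a = zr"
  using cl_eq zero_C sim_zero_dom by blast

lemma Q_dom: assumes dom: "superdomain A" shows "superdomain Q"
proof -
  obtain a where a: "a \<in> C" "a \<noteq> zr" using dom zero_C unfolding superdomain_def by blast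
  have "cl a \<noteq> cl zr" using cl_zero_iff dom a by blast
  then have nt: "sr_carrier Q \<noteq> {sr_zero Q}" using a unfolding Q_carrier Q_zero by blast
  have "\<forall>a\<in>C. \<forall>b\<in>C. cl zr \<in> sr_mul Q (cl a) (cl b) \<longleftrightarrow> cl a = cl zr \<or> cl b = cl zr"
  proof (intro ballI)
    fix a b assume ab: "a \<in> C" "b \<in> C"
    have "cl zr \<in> sr_mul Q (cl a) (cl b) \<longleftrightarrow> (\<exists>v\<in>mul a b. sim v zr)"
      using mulQ ab cl_in_img zero_C mul_C by metis
    also have "\<dots> \<longleftrightarrow> zr \<in> mul a b" using sim_zero_dom dom sim_refl zero_C by blast
    also have "\<dots> \<longleftrightarrow> a = zr \<or> b = zr" using dom ab unfolding superdomain_def by blast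
    also have "\<dots> \<longleftrightarrow> cl a = cl zr \<or> cl b = cl zr" using cl_zero_iff dom ab by blast
    finally show "cl zr \<in> sr_mul Q (cl a) (cl b) \<longleftrightarrow> cl a = cl zr \<or> cl b = cl zr" .
  qed
  then show ?thesis unfolding superdomain_def[of Q] Q_carrier[symmetric] Q_zero[symmetric]
    using Q_superring nt unfolding Q_carrier Q_zero ball_img by blast
qed

lemma Q_field: assumes fld: "superfield A" shows "superfield Q"
proof -
  have dom: "superdomain A" using fld unfolding superfield_def by blast
  have "\<forall>a\<in>C. cl a \<noteq> cl zr \<longrightarrow> (\<exists>b\<in>C. cl one \<in> sr_mul Q (cl a) (cl b))"
  proof (intro ballI impI)
    fix a assume a: "a \<in> C" "cl a \<noteq> cl zr"
    then have "a \<noteq> zr" by blast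
    then obtain b where b: "b \<in> C" "one \<in> mul a b" using fld a unfolding superfield_def by blast
    then have "cl one \<in> sr_mul Q (cl a) (cl b)" using mulQ a by simp
    then show "\<exists>b\<in>C. cl one \<in> sr_mul Q (cl a) (cl b)" using b by blast
  qed
  then show ?thesis unfolding superfield_def[of Q] using Q_dom dom
    unfolding Q_carrier Q_zero Q_one ball_img by blast
qed

end

theorem corollary4p6:
  fixes A :: "('a, 'b) sr_struct_scheme" and S :: "'a set"
  assumes "superring A" and "marshall_coherent A S" and "sr_zero A \<notin> S"
  shows "(full_superring A \<longrightarrow> full_superring (marshall_quotient A S)) \<and>
         (superdomain A \<longrightarrow> superdomain (marshall_quotient A S)) \<and>
         (superfield A \<longrightarrow> superfield (marshall_quotient A S))"
proof -
  interpret MQ A S using assms by unfold_locales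
  show ?thesis using Q_full Q_dom Q_field by blast
qed


end
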